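(* Let $s\geq1$ and consider an explicit $s$-stage Runge–Kutta method in Shu–Osher form with coefficients $a_{i,k}\geq 0$, $b_{i,k}\geq 0$ ($1\leq i\leq s$, $0\leq k\leq i-1$), satisfying $\sum_{k=0}^{i-1}a_{i,k}=1$ for each $i$. Apply it to $dy/dt=T^{(1)}_\lambda(\alpha,\Delta t)\lambda y$, i.e. $y^{(0)}=y^n$, $y^{(i)}=\sum_{k=0}^{i-1}\left(a_{i,k}y^{(k)}+\Delta t\, b_{i,k}T^{(1)}_\lambda(\alpha,\Delta t)\lambda y^{(k)}\right)$ for $i=1,\dots,s$, $y^{n+1}=y^{(s)}$, where $T^{(1)}_\lambda(\alpha,\Delta t)=(1-\alpha\Delta t\lambda)^{-1}$ and $\alpha>0$. If $\alpha\geq 0.5\,\max_{i,k}(b_{i,k}/a_{i,k})$, then the integration is unconditionally stable: $|y^{n+1}|\leq|y^n|$ for every $\Delta t>0$, every $\lambda\in\mathbb{C}$ with $\mathrm{Re}(\lambda)\leq0$, and every $y^n\in\mathbb{C}$.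
   Context: In the maximum, the ratio $b_{i,k}/a_{i,k}$ is understood as $0$ when $b_{i,k}=0$ and as $+\infty$ when $a_{i,k}=0<b_{i,k}$. *)

theory Defs
  imports "HOL-Analysis.Analysis" "HOL-Library.Extended_Real"
begin

definition T1 :: "real \<Rightarrow> real \<Rightarrow> complex \<Rightarrow> complex" where
  "T1 \<alpha> dt lam = inverse (1 - complex_of_real (\<alpha> * dt) * lam)"

definition so_ratio :: "real \<Rightarrow> real \<Rightarrow> ereal" where
  "so_ratio b a = (if b = 0 then 0 else if a = 0 then \<infinity> else ereal (b / a))"

end

theory Submission
  imports Defs
begin

lemma key_ineq:
  fixes a b al :: real and z :: complex
  assumes a: "a \<ge> 0" and b: "b \<ge> 0" and al: "al > 0" and bnd: "b \<le> 2 * al * a"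
    and z: "Re z \<le> 0"
  shows "cmod (complex_of_real a * (1 - complex_of_real al * z) + complex_of_real b * z)
         \<le> a * cmod (1 - complex_of_real al * z)"
proof -
  obtain x w where zx: "z = Complex x w" by (cases z)
  have x: "x \<le> 0" using z zx by simp
  let ?L = "complex_of_real a * (1 - complex_of_real al * z) + complex_of_real b * z"
  let ?R = "1 - complex_of_real al * z"
  have L2: "(cmod ?L)^2 = (a + (b - a*al)*x)^2 + ((b - a*al)*w)^2"
    unfolding cmod_power2 zx by (simp add: power2_eq_square algebra_simps)
  have R2: "(a * cmod ?R)^2 = a^2*((1 - al*x)^2 + (al*w)^2)"
    unfolding power_mult_distrib cmod_power2 zx by (simp add: power2_eq_square algebra_simps)
  have diff: "a^2*((1 - al*x)^2 + (al*w)^2) - ((a + (b - a*al)*x)^2 + ((b - a*al)*w)^2)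
      = -2*a*b*x + b*(2*al*a - b)*(x^2+w^2)"
    by (simp add: power2_eq_square) algebra
  have "0 \<le> (a*b)*(-x)" using a b x by (intro mult_nonneg_nonneg) auto
  then have "0 \<le> -2*a*b*x" by simp
  moreover have "0 \<le> 2*al*a - b" using bnd by linarith
  then have "0 \<le> b*(2*al*a - b)*(x^2+w^2)" using b
    by (intro mult_nonneg_nonneg) auto
  ultimately have "(cmod ?L)^2 \<le> (a * cmod ?R)^2" using L2 R2 diff by linarith
  then show ?thesis by (rule power2_le_imp_le) (intro mult_nonneg_nonneg a norm_ge_zero)
qed

lemma factor_bound:
  fixes a b al dt :: real and lam :: complex
  assumes a: "a \<ge> 0" and b: "b \<ge> 0" and al: "al > 0" and bnd: "b \<le> 2 * al * a"
    and dt: "dt > 0" and lam: "Re lam \<le> 0"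
  shows "cmod (complex_of_real a + complex_of_real (dt * b) * T1 al dt lam * lam) \<le> a"
proof -
  define z where "z = complex_of_real dt * lam"
  have z: "Re z \<le> 0" using dt lam by (simp add: z_def mult_nonneg_nonpos)
  have nz: "1 - complex_of_real al * z \<noteq> 0"
  proof
    assume "1 - complex_of_real al * z = 0"
    then have "Re (1 - complex_of_real al * z) = 0" by simp
    moreover have "Re (complex_of_real al * z) \<le> 0" using al z by (simp add: mult_nonneg_nonpos)
    ultimately show False by simp
  qed
  have eq: "complex_of_real a + complex_of_real (dt * b) * T1 al dt lam * lam
      = (complex_of_real a * (1 - complex_of_real al * z) + complex_of_real b * z)
        / (1 - complex_of_real al * z)"
    using nz unfolding T1_def z_def by (simp add: field_simps)
  have pos: "cmod (1 - complex_of_real al * z) > 0" using nz by simp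
  show ?thesis unfolding eq norm_divide
    using key_ineq[OF a b al bnd z] pos by (simp add: divide_le_eq)
qed

theorem theorem2:
  fixes s :: nat and a b :: "nat \<Rightarrow> nat \<Rightarrow> real" and \<alpha> dt :: real
    and lam yn :: complex and y :: "nat \<Rightarrow> complex"
  assumes "s \<ge> 1"
    and a_nonneg: "\<And>i k. 1 \<le> i \<Longrightarrow> i \<le> s \<Longrightarrow> k < i \<Longrightarrow> a i k \<ge> 0"
    and b_nonneg: "\<And>i k. 1 \<le> i \<Longrightarrow> i \<le> s \<Longrightarrow> k < i \<Longrightarrow> b i k \<ge> 0"
    and a_sum: "\<And>i. 1 \<le> i \<Longrightarrow> i \<le> s \<Longrightarrow> (\<Sum>k<i. a i k) = 1"
    and alpha_pos: "\<alpha> > 0"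
    and alpha_bound: "ereal \<alpha> \<ge> ereal (1/2) *
        Max {so_ratio (b i k) (a i k) | i k. 1 \<le> i \<and> i \<le> s \<and> k < i}"
    and dt_pos: "dt > 0"
    and lambda: "Re lam \<le> 0"
    and y0: "y 0 = yn"
    and stages: "\<And>i. 1 \<le> i \<Longrightarrow> i \<le> s \<Longrightarrow>
        y i = (\<Sum>k<i. complex_of_real (a i k) * y k
               + complex_of_real (dt * b i k) * T1 \<alpha> dt lam * lam * y k)"
  shows "cmod (y s) \<le> cmod yn"
proof -
  let ?S = "{so_ratio (b i k) (a i k) | i k. 1 \<le> i \<and> i \<le> s \<and> k < i}"
  have sub: "?S \<subseteq> (\<lambda>p. so_ratio (b (fst p) (snd p)) (a (fst p) (snd p))) ` ({1..s} \<times> {..<s})"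
  proof
    fix r assume "r \<in> ?S"
    then obtain i k where r: "r = so_ratio (b i k) (a i k)" and h: "1 \<le> i" "i \<le> s" "k < i"
      by blast
    have "(i, k) \<in> {1..s} \<times> {..<s}" using h by simp
    then show "r \<in> (\<lambda>p. so_ratio (b (fst p) (snd p)) (a (fst p) (snd p))) ` ({1..s} \<times> {..<s})"
      unfolding r by (rule rev_image_eqI) simp
  qed
  have fin: "finite ?S" by (rule finite_subset[OF sub]) simp
  have bnd: "b i k \<le> 2 * \<alpha> * a i k" if "1 \<le> i" "i \<le> s" "k < i" for i k
  proof -
    have "so_ratio (b i k) (a i k) \<in> ?S" using that by blast
    then have le: "so_ratio (b i k) (a i k) \<le> Max ?S" using fin by simp
    have "ereal (1/2) * so_ratio (b i k) (a i k) \<le> ereal (1/2) * Max ?S"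
      using le by (intro ereal_mult_left_mono) auto
    then have h: "ereal (1/2) * so_ratio (b i k) (a i k) \<le> ereal \<alpha>" by (rule order_trans[OF _ alpha_bound])
    have a0: "a i k \<ge> 0" and b0: "b i k \<ge> 0" using a_nonneg b_nonneg that by auto
    show ?thesis
    proof (cases "b i k = 0")
      case True then show ?thesis using a0 alpha_pos by simp
    next
      case False
      show ?thesis
      proof (cases "a i k = 0")
        case True
        with False h show ?thesis by (simp add: so_ratio_def)
      next
        case an: False
        with False h have "b i k / a i k / 2 \<le> \<alpha>" by (simp add: so_ratio_def)
        then show ?thesis using a0 an by (simp add: field_simps)
      qed
    qed
  qed
  have "cmod (y i) \<le> cmod yn" if "i \<le> s" for i
    using that
  proof (induction i rule: less_induct)
    case (less i)
    show ?case
    proof (cases "i = 0")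
      case True then show ?thesis using y0 by simp
    next
      case False
      then have i1: "1 \<le> i" by simp
      have "cmod (y i) = cmod (\<Sum>k<i. (complex_of_real (a i k)
            + complex_of_real (dt * b i k) * T1 \<alpha> dt lam * lam) * y k)"
        unfolding stages[OF i1 less.prems] by (simp add: distrib_right)
      also have "\<dots> \<le> (\<Sum>k<i. cmod ((complex_of_real (a i k)
            + complex_of_real (dt * b i k) * T1 \<alpha> dt lam * lam) * y k))"
        by (rule norm_sum)
      also have "\<dots> \<le> (\<Sum>k<i. a i k * cmod yn)"
      proof (rule sum_mono)
        fix k assume k: "k \<in> {..<i}"
        have "cmod ((complex_of_real (a i k)
            + complex_of_real (dt * b i k) * T1 \<alpha> dt lam * lam) * y k)
          = cmod (complex_of_real (a i k)
            + complex_of_real (dt * b i k) * T1 \<alpha> dt lam * lam) * cmod (y k)"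
          by (simp add: norm_mult)
        also have "\<dots> \<le> a i k * cmod yn"
          using k less.prems i1
          by (intro mult_mono factor_bound a_nonneg b_nonneg bnd alpha_pos dt_pos lambda less.IH) auto
        finally show "cmod ((complex_of_real (a i k)
            + complex_of_real (dt * b i k) * T1 \<alpha> dt lam * lam) * y k) \<le> a i k * cmod yn" .
      qed
      also have "\<dots> = cmod yn" using a_sum[OF i1 less.prems] by (simp add: sum_distrib_right[symmetric])
      finally show ?thesis .
    qed
  qed
  then show ?thesis by simp
qed

end
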